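(* Let $G$ be a group with a discrete left-invariant preordering $\preceq$, and let $a$ be a least positive element. Then for all $g,h\in G$: (1) if $1\preceq g$ and $1\preceq h$ then $1\prec agh$; (2) if $g\prec 1$ and $h\prec 1$ then $agh\prec 1$; (3) if $1\prec g$ then $1\prec aga^{-1}$ and $1\prec a^{-1}ga$; if $g\sim 1$ then $aga^{-1}\sim 1$ and $a^{-1}ga\sim 1$; if $g\prec 1$ then $aga^{-1}\prec 1$ and $a^{-1}ga\prec 1$.
   Context: A left-invariant preordering on a group $G$ is a relation $\preceq$ on $G$ that is reflexive, transitive and complete (for all $g,g'$ one has $g\preceq g'$ or $g'\preceq g$), and such that $g\preceq g'$ implies $hg\preceq hg'$ for all $h\in G$. Write $g\sim g'$ if $g\preceq g'$ and $g'\preceq g$, and $g\prec g'$ if $g\preceq g'$ and not $g\sim g'$. The preordering is discrete if there exists $a\in G$ with $1\prec a$ such that there is no $b\in G$ with $1\prec b\prec a$; such an $a$ is called a least positive element. *)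

theory Defs
  imports "HOL-Algebra.Group"
begin

definition left_inv_preorder :: "('a, 'b) monoid_scheme \<Rightarrow> ('a \<Rightarrow> 'a \<Rightarrow> bool) \<Rightarrow> bool" where
  "left_inv_preorder G P \<longleftrightarrow>
     (\<forall>g\<in>carrier G. P g g) \<and>
     (\<forall>g\<in>carrier G. \<forall>g'\<in>carrier G. \<forall>g''\<in>carrier G. P g g' \<longrightarrow> P g' g'' \<longrightarrow> P g g'') \<and>
     (\<forall>g\<in>carrier G. \<forall>g'\<in>carrier G. P g g' \<or> P g' g) \<and>
     (\<forall>g\<in>carrier G. \<forall>g'\<in>carrier G. \<forall>h\<in>carrier G. P g g' \<longrightarrow> P (h \<otimes>\<^bsub>G\<^esub> g) (h \<otimes>\<^bsub>G\<^esub> g'))"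

definition pequiv :: "('a \<Rightarrow> 'a \<Rightarrow> bool) \<Rightarrow> 'a \<Rightarrow> 'a \<Rightarrow> bool" where
  "pequiv P g g' \<longleftrightarrow> P g g' \<and> P g' g"

definition pless :: "('a \<Rightarrow> 'a \<Rightarrow> bool) \<Rightarrow> 'a \<Rightarrow> 'a \<Rightarrow> bool" where
  "pless P g g' \<longleftrightarrow> P g g' \<and> \<not> pequiv P g g'"

definition least_positive :: "('a, 'b) monoid_scheme \<Rightarrow> ('a \<Rightarrow> 'a \<Rightarrow> bool) \<Rightarrow> 'a \<Rightarrow> bool" where
  "least_positive G P a \<longleftrightarrow> a \<in> carrier G \<and> pless P \<one>\<^bsub>G\<^esub> a \<and>
     \<not> (\<exists>b\<in>carrier G. pless P \<one>\<^bsub>G\<^esub> b \<and> pless P b a)"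

definition discrete_preorder :: "('a, 'b) monoid_scheme \<Rightarrow> ('a \<Rightarrow> 'a \<Rightarrow> bool) \<Rightarrow> bool" where
  "discrete_preorder G P \<longleftrightarrow> (\<exists>a. least_positive G P a)"

end

theory Submission
  imports Defs
begin

locale lip = group G for G (structure) +
  fixes P :: "'a \<Rightarrow> 'a \<Rightarrow> bool" and a :: 'a
  assumes lip: "left_inv_preorder G P"
    and lp: "least_positive G P a"
begin

lemma trans': "x \<in> carrier G \<Longrightarrow> y \<in> carrier G \<Longrightarrow> z \<in> carrier G \<Longrightarrow> P x y \<Longrightarrow> P y z \<Longrightarrow> P x z"
  using lip unfolding left_inv_preorder_def by blast

lemma total: "x \<in> carrier G \<Longrightarrow> y \<in> carrier G \<Longrightarrow> P x y \<or> P y x"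
  using lip unfolding left_inv_preorder_def by blast

lemma linv: "h \<in> carrier G \<Longrightarrow> x \<in> carrier G \<Longrightarrow> y \<in> carrier G \<Longrightarrow> P x y \<Longrightarrow> P (h \<otimes> x) (h \<otimes> y)"
  using lip unfolding left_inv_preorder_def by blast

lemma mult_iff: "h \<in> carrier G \<Longrightarrow> x \<in> carrier G \<Longrightarrow> y \<in> carrier G \<Longrightarrow> P (h \<otimes> x) (h \<otimes> y) \<longleftrightarrow> P x y"
proof
  assume h: "h \<in> carrier G" "x \<in> carrier G" "y \<in> carrier G" and "P (h \<otimes> x) (h \<otimes> y)"
  then have "P (inv h \<otimes> (h \<otimes> x)) (inv h \<otimes> (h \<otimes> y))"
    using linv[of "inv h" "h \<otimes> x" "h \<otimes> y"] h by simp
  then show "P x y" using h by (simp add: m_assoc[symmetric])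
next
  assume "h \<in> carrier G" "x \<in> carrier G" "y \<in> carrier G" "P x y"
  then show "P (h \<otimes> x) (h \<otimes> y)" using lip unfolding left_inv_preorder_def by blast
qed

lemma a_c: "a \<in> carrier G" and a_pos: "\<not> P a \<one>" and a_nn: "P \<one> a"
  using lp unfolding least_positive_def pless_def pequiv_def by auto

lemma least: "b \<in> carrier G \<Longrightarrow> \<not> P b \<one> \<Longrightarrow> P a b"
  using lp total[of b \<one>] total[of a b] unfolding least_positive_def pless_def pequiv_def
  by auto

lemma inv1: "x \<in> carrier G \<Longrightarrow> P x \<one> \<longleftrightarrow> P \<one> (inv x)"
  using mult_iff[of "inv x" x \<one>] by simp

lemma inv2: "x \<in> carrier G \<Longrightarrow> P \<one> x \<longleftrightarrow> P (inv x) \<one>"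
  using mult_iff[of "inv x" \<one> x] by simp

lemma K: assumes g: "g \<in> carrier G" shows "P (a \<otimes> g \<otimes> inv a) \<one> \<longleftrightarrow> P g \<one>"
proof
  have ac: "a \<in> carrier G" by (rule a_c)
  assume h: "P (a \<otimes> g \<otimes> inv a) \<one>"
  show "P g \<one>"
  proof (rule ccontr)
    assume ng: "\<not> P g \<one>"
    show False
    proof (cases "P \<one> (g \<otimes> inv a)")
      case True
      then have "P (a \<otimes> \<one>) (a \<otimes> (g \<otimes> inv a))" using linv[of a \<one> "g \<otimes> inv a"] g ac by simp
      then have "P a (a \<otimes> g \<otimes> inv a)" using g ac by (simp add: m_assoc)
      then have "P a \<one>" using trans'[of a "a \<otimes> g \<otimes> inv a" \<one>] h g ac by simp
      then show False using a_pos by simp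
    next
      case False
      then have "\<not> P (inv (g \<otimes> inv a)) \<one>" using inv2 g ac by simp
      moreover have "inv (g \<otimes> inv a) = a \<otimes> inv g" using g ac by (simp add: inv_mult_group)
      ultimately have "P a (a \<otimes> inv g)" using least g ac by simp
      then have "P (a \<otimes> \<one>) (a \<otimes> inv g)" using ac by simp
      then have "P \<one> (inv g)" using mult_iff[of a \<one> "inv g"] g ac by simp
      then show False using inv1 g ng by simp
    qed
  qed
next
  have ac: "a \<in> carrier G" by (rule a_c)
  assume h: "P g \<one>"
  show "P (a \<otimes> g \<otimes> inv a) \<one>"
  proof (rule ccontr)
    assume n: "\<not> P (a \<otimes> g \<otimes> inv a) \<one>"
    then have "P a (a \<otimes> g \<otimes> inv a)" using least g ac by simp
    then have "P (a \<otimes> \<one>) (a \<otimes> (g \<otimes> inv a))" using g ac by (simp add: m_assoc)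
    then have "P \<one> (g \<otimes> inv a)" using mult_iff[of a \<one> "g \<otimes> inv a"] g ac by simp
    then have "P (inv (g \<otimes> inv a)) \<one>" using inv2 g ac by simp
    moreover have "inv (g \<otimes> inv a) = a \<otimes> inv g" using g ac by (simp add: inv_mult_group)
    ultimately have 1: "P (a \<otimes> inv g) \<one>" by simp
    have "P \<one> (inv g)" using inv1 g h by simp
    then have "P (a \<otimes> \<one>) (a \<otimes> inv g)" using linv[of a \<one> "inv g"] g ac by simp
    then have "P a (a \<otimes> inv g)" using ac by simp
    then have "P a \<one>" using trans'[of a "a \<otimes> inv g" \<one>] 1 g ac by simp
    then show False using a_pos by simp
  qed
qed

lemma K2: assumes g: "g \<in> carrier G" shows "P \<one> (a \<otimes> g \<otimes> inv a) \<longleftrightarrow> P \<one> g"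
proof -
  have ac: "a \<in> carrier G" by (rule a_c)
  have "inv (a \<otimes> g \<otimes> inv a) = a \<otimes> inv g \<otimes> inv a" using g ac
    by (simp add: inv_mult_group m_assoc)
  then show ?thesis using inv2[of "a \<otimes> g \<otimes> inv a"] inv2[of g] K[of "inv g"] g ac by simp
qed

lemma conj_back: assumes g: "g \<in> carrier G" shows "a \<otimes> (inv a \<otimes> g \<otimes> a) \<otimes> inv a = g"
  using g a_c by (simp add: m_assoc[symmetric]) (simp add: m_assoc)

lemma K3: assumes g: "g \<in> carrier G" shows "P (inv a \<otimes> g \<otimes> a) \<one> \<longleftrightarrow> P g \<one>"
  using K[of "inv a \<otimes> g \<otimes> a"] conj_back[OF g] g a_c by simp

lemma K4: assumes g: "g \<in> carrier G" shows "P \<one> (inv a \<otimes> g \<otimes> a) \<longleftrightarrow> P \<one> g"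
  using K2[of "inv a \<otimes> g \<otimes> a"] conj_back[OF g] g a_c by simp

lemma part1: assumes g: "g \<in> carrier G" and h: "h \<in> carrier G" and "P \<one> g" "P \<one> h"
  shows "P \<one> (a \<otimes> g \<otimes> h) \<and> \<not> P (a \<otimes> g \<otimes> h) \<one>"
proof -
  have ac: "a \<in> carrier G" by (rule a_c)
  have "P (g \<otimes> \<one>) (g \<otimes> h)" using linv[of g \<one> h] assms by simp
  then have "P \<one> (g \<otimes> h)" using trans'[of \<one> g "g \<otimes> h"] assms by simp
  then have "P (a \<otimes> \<one>) (a \<otimes> (g \<otimes> h))" using linv[of a \<one> "g \<otimes> h"] assms ac by simp
  then have 1: "P a (a \<otimes> g \<otimes> h)" using assms ac by (simp add: m_assoc)
  have 2: "\<not> P (a \<otimes> g \<otimes> h) \<one>" using 1 trans'[of a "a \<otimes> g \<otimes> h" \<one>] a_pos assms ac by auto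
  show ?thesis using 1 2 trans'[of \<one> a "a \<otimes> g \<otimes> h"] a_nn assms ac by auto
qed

lemma part2: assumes g: "g \<in> carrier G" and h: "h \<in> carrier G" and ng: "\<not> P \<one> g" and nh: "\<not> P \<one> h"
  shows "\<not> P \<one> (a \<otimes> g \<otimes> h)"
proof
  have ac: "a \<in> carrier G" by (rule a_c)
  assume 1: "P \<one> (a \<otimes> g \<otimes> h)"
  have "\<not> P ((a \<otimes> g) \<otimes> \<one>) ((a \<otimes> g) \<otimes> h)" using mult_iff[of "a \<otimes> g" \<one> h] nh assms ac by simp
  then have 2: "\<not> P (a \<otimes> g) (a \<otimes> g \<otimes> h)" using assms ac by simp
  have "\<not> P (a \<otimes> g) \<one>" using 1 2 trans'[of "a \<otimes> g" \<one> "a \<otimes> g \<otimes> h"] assms ac by auto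
  then have "P a (a \<otimes> g)" using least assms ac by simp
  then have "P (a \<otimes> \<one>) (a \<otimes> g)" using ac by simp
  then have "P \<one> g" using mult_iff[of a \<one> g] assms ac by simp
  then show False using ng by simp
qed

end

theorem mainTheorem3:
  fixes G :: "('a, 'b) monoid_scheme" and P :: "'a \<Rightarrow> 'a \<Rightarrow> bool" and a :: 'a
  assumes "group G"
    and "left_inv_preorder G P"
    and "discrete_preorder G P"
    and "least_positive G P a"
  shows
    "\<forall>g\<in>carrier G. \<forall>h\<in>carrier G.
       ((P \<one>\<^bsub>G\<^esub> g \<and> P \<one>\<^bsub>G\<^esub> h \<longrightarrow> pless P \<one>\<^bsub>G\<^esub> (a \<otimes>\<^bsub>G\<^esub> g \<otimes>\<^bsub>G\<^esub> h)) \<and>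
        (pless P g \<one>\<^bsub>G\<^esub> \<and> pless P h \<one>\<^bsub>G\<^esub> \<longrightarrow> pless P (a \<otimes>\<^bsub>G\<^esub> g \<otimes>\<^bsub>G\<^esub> h) \<one>\<^bsub>G\<^esub>) \<and>
        (pless P \<one>\<^bsub>G\<^esub> g \<longrightarrow>
           pless P \<one>\<^bsub>G\<^esub> (a \<otimes>\<^bsub>G\<^esub> g \<otimes>\<^bsub>G\<^esub> inv\<^bsub>G\<^esub> a) \<and>
           pless P \<one>\<^bsub>G\<^esub> (inv\<^bsub>G\<^esub> a \<otimes>\<^bsub>G\<^esub> g \<otimes>\<^bsub>G\<^esub> a)) \<and>
        (pequiv P g \<one>\<^bsub>G\<^esub> \<longrightarrow>
           pequiv P (a \<otimes>\<^bsub>G\<^esub> g \<otimes>\<^bsub>G\<^esub> inv\<^bsub>G\<^esub> a) \<one>\<^bsub>G\<^esub> \<and>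
           pequiv P (inv\<^bsub>G\<^esub> a \<otimes>\<^bsub>G\<^esub> g \<otimes>\<^bsub>G\<^esub> a) \<one>\<^bsub>G\<^esub>) \<and>
        (pless P g \<one>\<^bsub>G\<^esub> \<longrightarrow>
           pless P (a \<otimes>\<^bsub>G\<^esub> g \<otimes>\<^bsub>G\<^esub> inv\<^bsub>G\<^esub> a) \<one>\<^bsub>G\<^esub> \<and>
           pless P (inv\<^bsub>G\<^esub> a \<otimes>\<^bsub>G\<^esub> g \<otimes>\<^bsub>G\<^esub> a) \<one>\<^bsub>G\<^esub>))"
proof -
  interpret L: lip G P a using assms by (simp add: lip_def lip_axioms_def)
  have ac: "a \<in> carrier G" by (rule L.a_c)
  show ?thesis
  proof (intro ballI conjI impI)
    fix g h assume g: "g \<in> carrier G" and h: "h \<in> carrier G"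
    note ps = pless_def pequiv_def
    { assume "P \<one>\<^bsub>G\<^esub> g \<and> P \<one>\<^bsub>G\<^esub> h"
      then show "pless P \<one>\<^bsub>G\<^esub> (a \<otimes>\<^bsub>G\<^esub> g \<otimes>\<^bsub>G\<^esub> h)"
        using L.part1[OF g h] unfolding ps by blast }
    { assume "pless P g \<one>\<^bsub>G\<^esub> \<and> pless P h \<one>\<^bsub>G\<^esub>"
      then show "pless P (a \<otimes>\<^bsub>G\<^esub> g \<otimes>\<^bsub>G\<^esub> h) \<one>\<^bsub>G\<^esub>"
        using L.part2[OF g h] L.total[of "a \<otimes>\<^bsub>G\<^esub> g \<otimes>\<^bsub>G\<^esub> h" "\<one>\<^bsub>G\<^esub>"] g h ac
        unfolding ps by auto }
    { assume "pless P \<one>\<^bsub>G\<^esub> g"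
      then show "pless P \<one>\<^bsub>G\<^esub> (a \<otimes>\<^bsub>G\<^esub> g \<otimes>\<^bsub>G\<^esub> inv\<^bsub>G\<^esub> a)"
        using L.K[OF g] L.K2[OF g] unfolding ps by blast }
    { assume "pless P \<one>\<^bsub>G\<^esub> g"
      then show "pless P \<one>\<^bsub>G\<^esub> (inv\<^bsub>G\<^esub> a \<otimes>\<^bsub>G\<^esub> g \<otimes>\<^bsub>G\<^esub> a)"
        using L.K3[OF g] L.K4[OF g] unfolding ps by blast }
    { assume "pequiv P g \<one>\<^bsub>G\<^esub>"
      then show "pequiv P (a \<otimes>\<^bsub>G\<^esub> g \<otimes>\<^bsub>G\<^esub> inv\<^bsub>G\<^esub> a) \<one>\<^bsub>G\<^esub>"
        using L.K[OF g] L.K2[OF g] unfolding ps by blast }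
    { assume "pequiv P g \<one>\<^bsub>G\<^esub>"
      then show "pequiv P (inv\<^bsub>G\<^esub> a \<otimes>\<^bsub>G\<^esub> g \<otimes>\<^bsub>G\<^esub> a) \<one>\<^bsub>G\<^esub>"
        using L.K3[OF g] L.K4[OF g] unfolding ps by blast }
    { assume "pless P g \<one>\<^bsub>G\<^esub>"
      then show "pless P (a \<otimes>\<^bsub>G\<^esub> g \<otimes>\<^bsub>G\<^esub> inv\<^bsub>G\<^esub> a) \<one>\<^bsub>G\<^esub>"
        using L.K[OF g] L.K2[OF g] unfolding ps by blast }
    { assume "pless P g \<one>\<^bsub>G\<^esub>"
      then show "pless P (inv\<^bsub>G\<^esub> a \<otimes>\<^bsub>G\<^esub> g \<otimes>\<^bsub>G\<^esub> a) \<one>\<^bsub>G\<^esub>"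
        using L.K3[OF g] L.K4[OF g] unfolding ps by blast }
  qed
qed

end
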